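(* Let $V:\mathcal{M}^+(\mathbb{R}^d)\to\mathcal{M}^+(\mathbb{R}^d\times\mathbb{R}^d)$ satisfy $\pi_1^{\#}V[\mu]=\mu$ for all $\mu$, and suppose that for every $R>0$ there is a constant $C_F(R)$ such that $\mathcal{W}^g(V[\mu],V[\nu])\le C_F(R)\|\mu-\nu\|_{BL^*}$ whenever $\mu,\nu$ are supported in $B(0,R)$. Then: (V2) for every $R>0$ there is a constant $C$ such that $\|V[\mu]-V[\nu]\|_{BL^*}\le C\|\mu-\nu\|_{BL^*}$ whenever $\mu,\nu$ are supported in $B(0,R)$; and (V3) for every $R>0$ there is $C_H(R)$ such that whenever $\mu,\nu$ are supported in $B(0,R)$, for all $\tau>0$, $$\sup_{\|\psi\|_{BL(\mathbb{R}^d)}\le1}\int_{\mathbb{R}^d\times\mathbb{R}^d}\psi(x+\tau v)\,d(V[\mu]-V[\nu])(x,v)\le(1+C_H(R)\tau)\|\mu-\nu\|_{BL^*}.$$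
   Context: $\mathcal{M}^+(\mathbb{R}^k)$: finite nonnegative Borel measures; $\pi_1(x,v)=x$. $\|f\|_{BL}=\max(\sup|f|,\operatorname{Lip}f)$, $\|\mu\|_{BL^*}=\sup\{\int\psi\,d\mu:\|\psi\|_{BL}\le1\}$, $\|\cdot\|_{TV}$ total variation. For nonnegative measures $\alpha,\beta$ of equal finite mass on $\mathbb{R}^d$, $W_1(\alpha,\beta)=\inf\int|x-y|\,d\gamma$ over couplings $\gamma$ (nonnegative measures on $\mathbb{R}^{2d}$ with marginals $\alpha,\beta$); $\mathcal{P}^{opt}(\alpha,\beta)$ is the set of minimizing couplings. For $\tilde V_1,\tilde V_2\in\mathcal{M}^+(\mathbb{R}^d\times\mathbb{R}^d)$ of equal mass, $\mathcal{P}(\tilde V_1,\tilde V_2)$ is the set of nonnegative measures $p$ on $(\mathbb{R}^d)^4$ (variables $(x,v,y,w)$) with $\pi_{12}^{\#}p=\tilde V_1$, $\pi_{34}^{\#}p=\tilde V_2$. For $V_1,V_2\in\mathcal{M}^+(\mathbb{R}^d\times\mathbb{R}^d)$ with $\mu_i=\pi_1^{\#}V_i$, define $\mathcal{W}^g(V_1,V_2)=\inf\{\int|v-w|\,dp(x,v,y,w)\}$, the infimum over all $\tilde V_1\le V_1$, $\tilde V_2\le V_2$ (nonnegative submeasures), with $\tilde\mu_i=\pi_1^{\#}\tilde V_i$, and $p\in\mathcal{P}(\tilde V_1,\tilde V_2)$ such that $\|\mu_1-\mu_2\|_{BL^*}=\|\mu_1-\tilde\mu_1\|_{TV}+\|\mu_2-\tilde\mu_2\|_{TV}+W_1(\tilde\mu_1,\tilde\mu_2)$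 and $\pi_{13}^{\#}p\in\mathcal{P}^{opt}(\tilde\mu_1,\tilde\mu_2)$. *)

theory Defs
  imports "HOL-Analysis.Analysis"
begin

definition Mplus :: "'a::euclidean_space measure set" where
  "Mplus = {M. sets M = sets borel \<and> finite_measure M}"

definition submeasure :: "'a::euclidean_space measure \<Rightarrow> 'a measure \<Rightarrow> bool" where
  "submeasure N M \<longleftrightarrow> N \<in> Mplus \<and> (\<forall>A\<in>sets borel. emeasure N A \<le> emeasure M A)"

definition supported_in :: "'a::euclidean_space measure \<Rightarrow> real \<Rightarrow> bool" where
  "supported_in M R \<longleftrightarrow> emeasure M (space M - cball 0 R) = 0"

definition BL_unit :: "('a::euclidean_space \<Rightarrow> real) \<Rightarrow> bool" where
  "BL_unit f \<longleftrightarrow> (\<forall>x. \<bar>f x\<bar> \<le> 1) \<and> (\<forall>x y. \<bar>f x - f y\<bar> \<le> dist x y)"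

definition BL_dist :: "'a::euclidean_space measure \<Rightarrow> 'a measure \<Rightarrow> real" where
  "BL_dist \<mu> \<nu> = Sup {(\<integral>x. \<psi> x \<partial>\<mu>) - (\<integral>x. \<psi> x \<partial>\<nu>) | \<psi>. BL_unit \<psi>}"

definition TV_dist :: "'a::euclidean_space measure \<Rightarrow> 'a measure \<Rightarrow> real" where
  "TV_dist \<mu> \<nu> = Sup {(\<integral>x. f x \<partial>\<mu>) - (\<integral>x. f x \<partial>\<nu>) | f.
      f \<in> borel_measurable borel \<and> (\<forall>x. \<bar>f x\<bar> \<le> 1)}"

definition couplings :: "'a::euclidean_space measure \<Rightarrow> 'a measure \<Rightarrow> ('a \<times> 'a) measure set" where
  "couplings \<alpha> \<beta> = {\<gamma>. \<gamma> \<in> Mplus \<and> distr \<gamma> borel fst = \<alpha> \<and> distr \<gamma> borel snd = \<beta>}"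

definition W1 :: "'a::euclidean_space measure \<Rightarrow> 'a measure \<Rightarrow> ennreal" where
  "W1 \<alpha> \<beta> = (INF \<gamma>\<in>couplings \<alpha> \<beta>. \<integral>\<^sup>+ z. ennreal (dist (fst z) (snd z)) \<partial>\<gamma>)"

definition opt_couplings :: "'a::euclidean_space measure \<Rightarrow> 'a measure \<Rightarrow> ('a \<times> 'a) measure set" where
  "opt_couplings \<alpha> \<beta> = {\<gamma>\<in>couplings \<alpha> \<beta>. (\<integral>\<^sup>+ z. ennreal (dist (fst z) (snd z)) \<partial>\<gamma>) = W1 \<alpha> \<beta>}"

definition transport_plans :: "('a::euclidean_space \<times> 'a) measure \<Rightarrow> ('a \<times> 'a) measure
    \<Rightarrow> (('a \<times> 'a) \<times> ('a \<times> 'a)) measure set" where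
  "transport_plans V1 V2 = {p. p \<in> Mplus \<and> distr p borel fst = V1 \<and> distr p borel snd = V2}"

definition pi13 :: "('a \<times> 'a) \<times> ('a \<times> 'a) \<Rightarrow> 'a \<times> 'a" where
  "pi13 z = (fst (fst z), fst (snd z))"

definition Wg :: "('a::euclidean_space \<times> 'a) measure \<Rightarrow> ('a \<times> 'a) measure \<Rightarrow> ennreal" where
  "Wg V1 V2 = (INF p \<in> {p. \<exists>U1 U2.
        submeasure U1 V1 \<and> submeasure U2 V2 \<and> p \<in> transport_plans U1 U2 \<and>
        ennreal (BL_dist (distr V1 borel fst) (distr V2 borel fst)) =
          ennreal (TV_dist (distr V1 borel fst) (distr U1 borel fst))
          + ennreal (TV_dist (distr V2 borel fst) (distr U2 borel fst))
          + W1 (distr U1 borel fst) (distr U2 borel fst) \<and>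
        distr p borel pi13 \<in> opt_couplings (distr U1 borel fst) (distr U2 borel fst)}.
      \<integral>\<^sup>+ z. ennreal (dist (snd (fst z)) (snd (snd z))) \<partial>p)"

definition V3_quantity :: "real \<Rightarrow> ('a::euclidean_space \<times> 'a) measure \<Rightarrow> ('a \<times> 'a) measure \<Rightarrow> real" where
  "V3_quantity \<tau> V1 V2 = Sup {(\<integral>z. \<psi> (fst z + \<tau> *\<^sub>R snd z) \<partial>V1) - (\<integral>z. \<psi> (fst z + \<tau> *\<^sub>R snd z) \<partial>V2)
      | \<psi>. BL_unit \<psi>}"

end

theory Submission
  imports Defs
begin

lemma Mplus_space: "M \<in> Mplus \<Longrightarrow> space M = UNIV"
  unfolding Mplus_def using sets_eq_imp_space_eq[of M borel] by simp

lemma Mplus_fin: "M \<in> Mplus \<Longrightarrow> finite_measure M"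
  unfolding Mplus_def by simp

lemma Mplus_meas: "M \<in> Mplus \<Longrightarrow> f \<in> borel_measurable borel \<Longrightarrow> f \<in> borel_measurable M"
proof -
  assume "M \<in> Mplus" "f \<in> borel_measurable borel"
  moreover have "sets M = sets borel" using \<open>M \<in> Mplus\<close> unfolding Mplus_def by simp
  ultimately show ?thesis using measurable_cong_sets[of M borel borel borel] by simp
qed

lemma bounded_integrable:
  assumes "M \<in> Mplus" "f \<in> borel_measurable borel" "\<And>x. \<bar>f x\<bar> \<le> (B::real)"
  shows "integrable M f"
  by (rule finite_measure.integrable_const_bound[where B=B, OF Mplus_fin[OF assms(1)]])
    (simp_all add: assms(3) Mplus_meas[OF assms(1,2)])

lemma integral_bound1:
  assumes "M \<in> Mplus" "f \<in> borel_measurable borel" "\<And>x. \<bar>f x\<bar> \<le> (1::real)"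
  shows "\<bar>integral\<^sup>L M f\<bar> \<le> measure M (space M)"
proof -
  have i1: "integrable M (\<lambda>_. 1::real)"
    by (rule bounded_integrable[OF assms(1), of _ 1]) auto
  have i2: "integrable M f"
    by (rule bounded_integrable[OF assms(1,2), of 1]) (rule assms(3))
  have "\<bar>integral\<^sup>L M f\<bar> \<le> integral\<^sup>L M (\<lambda>_. 1::real)"
    by (rule integral_abs_bound_integral[OF i2 i1]) (rule assms(3))
  then show ?thesis by simp
qed

lemma bdd_diff:
  assumes "M \<in> Mplus" "N \<in> Mplus"
    and "\<And>f. P f \<Longrightarrow> f \<in> borel_measurable borel \<and> (\<forall>x. \<bar>f x\<bar> \<le> (1::real))"
  shows "bdd_above {integral\<^sup>L M f - integral\<^sup>L N f | f. P f}"
proof (rule bdd_aboveI[where M="measure M (space M) + measure N (space N)"])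
  fix y assume "y \<in> {integral\<^sup>L M f - integral\<^sup>L N f | f. P f}"
  then obtain f where y: "y = integral\<^sup>L M f - integral\<^sup>L N f" and "P f" by blast
  then have fm: "f \<in> borel_measurable borel" and fb: "\<And>x. \<bar>f x\<bar> \<le> 1" using assms(3) by auto
  have "\<bar>integral\<^sup>L M f\<bar> \<le> measure M (space M)" by (rule integral_bound1[OF assms(1) fm fb])
  moreover have "\<bar>integral\<^sup>L N f\<bar> \<le> measure N (space N)" by (rule integral_bound1[OF assms(2) fm fb])
  ultimately show "y \<le> measure M (space M) + measure N (space N)"
    unfolding y by linarith
qed

lemma BL_unit_meas: "BL_unit f \<Longrightarrow> f \<in> borel_measurable borel"
  apply (rule borel_measurable_continuous_onI)
  unfolding BL_unit_def continuous_on_iff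
  by (metis dual_order.trans UNIV_I dist_real_def order_le_less_trans)

lemma BL_dist_nonneg: "M \<in> Mplus \<Longrightarrow> N \<in> Mplus \<Longrightarrow> BL_dist M N \<ge> 0"
  unfolding BL_dist_def
  apply (rule cSup_upper2[where x=0])
  apply (rule CollectI, rule exI[where x="\<lambda>_. 0"], simp add: BL_unit_def)
  apply simp
  apply (rule bdd_diff, auto simp: BL_unit_meas BL_unit_def)
  done

lemma TV_ge: "M \<in> Mplus \<Longrightarrow> N \<in> Mplus \<Longrightarrow> f \<in> borel_measurable borel \<Longrightarrow> (\<forall>x. \<bar>f x\<bar> \<le> 1)
   \<Longrightarrow> integral\<^sup>L M f - integral\<^sup>L N f \<le> TV_dist M N"
  unfolding TV_dist_def
  apply (rule cSup_upper)
  apply blast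
  apply (rule bdd_diff, auto)
  done

lemma sub_mono:
  assumes U: "submeasure U V" and V: "V \<in> Mplus"
    and f: "f \<in> borel_measurable borel" "\<And>x. \<bar>f x\<bar> \<le> (1::real)"
  shows "integral\<^sup>L V f - integral\<^sup>L U f \<le> measure V UNIV - measure U UNIV"
proof -
  have UM: "U \<in> Mplus" using U unfolding submeasure_def by simp
  have ss: "sets U = sets V" using UM V unfolding Mplus_def by simp
  have le: "U \<le> V" using U ss unfolding submeasure_def
    using V unfolding Mplus_def by (subst le_measure[OF ss]) (simp add: ss)
  define g where "g x = 1 - f x" for x
  have gm: "g \<in> borel_measurable borel" unfolding g_def using f by auto
  have gb: "\<And>x. \<bar>g x\<bar> \<le> 2" "\<And>x. 0 \<le> g x" unfolding g_def using f
    by (auto simp: abs_le_iff)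
  have iU: "integrable U g" and iV: "integrable V g"
    using bounded_integrable[OF UM gm gb(1)] bounded_integrable[OF V gm gb(1)] by auto
  have "ennreal (integral\<^sup>L U g) = (\<integral>\<^sup>+ x. ennreal (g x) \<partial>U)"
    using nn_integral_eq_integral[OF iU] gb by simp
  also have "\<dots> \<le> (\<integral>\<^sup>+ x. ennreal (g x) \<partial>V)"
    by (rule nn_integral_mono_measure[OF ss le])
  also have "\<dots> = ennreal (integral\<^sup>L V g)"
    using nn_integral_eq_integral[OF iV] gb by simp
  finally have "integral\<^sup>L U g \<le> integral\<^sup>L V g"
    using gb by (simp add: ennreal_le_iff integral_nonneg)
  moreover have "integral\<^sup>L U g = measure U UNIV - integral\<^sup>L U f"
    unfolding g_def
    using bounded_integrable[OF UM f] bounded_integrable[OF UM, of "\<lambda>_. 1" 1] Mplus_space[OF UM]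
    by (subst Bochner_Integration.integral_diff) auto
  moreover have "integral\<^sup>L V g = measure V UNIV - integral\<^sup>L V f"
    unfolding g_def
    using bounded_integrable[OF V f] bounded_integrable[OF V, of "\<lambda>_. 1" 1] Mplus_space[OF V]
    by (subst Bochner_Integration.integral_diff) auto
  ultimately show ?thesis by simp
qed

lemma cont_meas: "continuous_on UNIV f \<Longrightarrow> M \<in> Mplus \<Longrightarrow> f \<in> M \<rightarrow>\<^sub>M borel"
  using Mplus_meas borel_measurable_continuous_onI by blast

lemma coupling_bound:
  fixes \<phi> :: "'a::euclidean_space \<times> 'a \<Rightarrow> real"
  assumes U1: "U1 \<in> Mplus" and U2: "U2 \<in> Mplus" and p: "p \<in> transport_plans U1 U2"
    and \<phi>m: "\<phi> \<in> borel_measurable borel" and \<phi>b: "\<And>z. \<bar>\<phi> z\<bar> \<le> 1" and \<tau>: "\<tau> \<ge> 0"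
    and lip: "\<And>x v y w. \<phi> (x,v) - \<phi> (y,w) \<le> dist x y + \<tau> * dist v w"
  shows "ennreal (integral\<^sup>L U1 \<phi> - integral\<^sup>L U2 \<phi>)
     \<le> (\<integral>\<^sup>+ z. ennreal (dist (fst (fst z)) (fst (snd z))) \<partial>p)
        + ennreal \<tau> * (\<integral>\<^sup>+ z. ennreal (dist (snd (fst z)) (snd (snd z))) \<partial>p)"
proof -
  have pM: "p \<in> Mplus" and d1: "distr p borel fst = U1" and d2: "distr p borel snd = U2"
    using p unfolding transport_plans_def by auto
  have fm: "fst \<in> p \<rightarrow>\<^sub>M borel" "snd \<in> p \<rightarrow>\<^sub>M borel"
    by (auto intro!: cont_meas pM continuous_intros)
  have i1: "integral\<^sup>L U1 \<phi> = (\<integral>z. \<phi> (fst z) \<partial>p)"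
    using integral_distr[OF fm(1) \<phi>m] d1 by simp
  have i2: "integral\<^sup>L U2 \<phi> = (\<integral>z. \<phi> (snd z) \<partial>p)"
    using integral_distr[OF fm(2) \<phi>m] d2 by simp
  define g where "g z = \<phi> (fst z) - \<phi> (snd z)" for z
  have m1: "(\<lambda>z. \<phi> (fst z)) \<in> borel_measurable borel"
    using measurable_compose[OF borel_measurable_continuous_onI[OF continuous_on_fst[OF continuous_on_id]] \<phi>m] by simp
  have m2: "(\<lambda>z. \<phi> (snd z)) \<in> borel_measurable borel"
    using measurable_compose[OF borel_measurable_continuous_onI[OF continuous_on_snd[OF continuous_on_id]] \<phi>m] by simp
  have gm: "g \<in> borel_measurable borel"
    unfolding g_def
    using measurable_compose[OF borel_measurable_continuous_onI[OF continuous_on_fst[OF continuous_on_id]] \<phi>m]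
      measurable_compose[OF borel_measurable_continuous_onI[OF continuous_on_snd[OF continuous_on_id]] \<phi>m]
    by (intro borel_measurable_diff) auto
  have gb: "\<bar>g z\<bar> \<le> 2" for z
    unfolding g_def using \<phi>b[of "fst z"] \<phi>b[of "snd z"] by (simp add: abs_le_iff)
  have ig: "integrable p g" by (rule bounded_integrable[OF pM gm gb])
  have ig1: "integrable p (\<lambda>z. \<phi> (fst z))" "integrable p (\<lambda>z. \<phi> (snd z))"
    using \<phi>b by (auto intro!: bounded_integrable[OF pM, of _ 1] m1 m2)
  have "integral\<^sup>L U1 \<phi> - integral\<^sup>L U2 \<phi> = integral\<^sup>L p g"
    unfolding i1 i2 g_def using ig1 by simp
  also have "\<dots> \<le> integral\<^sup>L p (\<lambda>z. max (g z) 0)"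
    using ig by (intro integral_mono) auto
  finally have "ennreal (integral\<^sup>L U1 \<phi> - integral\<^sup>L U2 \<phi>) \<le> ennreal (integral\<^sup>L p (\<lambda>z. max (g z) 0))"
    by (rule ennreal_leI)
  also have "\<dots> = (\<integral>\<^sup>+ z. ennreal (max (g z) 0) \<partial>p)"
    using ig by (intro nn_integral_eq_integral[symmetric]) auto
  also have "\<dots> \<le> (\<integral>\<^sup>+ z. ennreal (dist (fst (fst z)) (fst (snd z))) + ennreal \<tau> * ennreal (dist (snd (fst z)) (snd (snd z))) \<partial>p)"
  proof (rule nn_integral_mono)
    fix z :: "('a \<times> 'a) \<times> ('a \<times> 'a)"
    obtain x v y w where z: "z = ((x,v),(y,w))" by (metis prod.collapse)
    have "max (g z) 0 \<le> dist x y + \<tau> * dist v w"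
      using lip[of x v y w] \<tau> unfolding g_def z by simp
    then show "ennreal (max (g z) 0) \<le> ennreal (dist (fst (fst z)) (fst (snd z))) + ennreal \<tau> * ennreal (dist (snd (fst z)) (snd (snd z)))"
      unfolding z using \<tau> by (simp add: ennreal_plus[symmetric] ennreal_mult[symmetric] ennreal_leI del: ennreal_plus)
  qed
  also have "\<dots> = (\<integral>\<^sup>+ z. ennreal (dist (fst (fst z)) (fst (snd z))) \<partial>p)
        + ennreal \<tau> * (\<integral>\<^sup>+ z. ennreal (dist (snd (fst z)) (snd (snd z))) \<partial>p)"
  proof -
    have dm1: "(\<lambda>z. dist (fst (fst z)) (fst (snd z))) \<in> borel_measurable p"
      by (intro cont_meas pM continuous_intros)
    have dm2: "(\<lambda>z. dist (snd (fst z)) (snd (snd z))) \<in> borel_measurable p"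
      by (intro cont_meas pM continuous_intros)
    show ?thesis
      using dm1 dm2 by (subst nn_integral_add) (auto simp: nn_integral_cmult)
  qed
  finally show ?thesis .
qed

lemma fst_meas: "M \<in> Mplus \<Longrightarrow> fst \<in> M \<rightarrow>\<^sub>M borel"
  by (intro cont_meas continuous_intros)

lemma distr_fst_Mplus: "M \<in> Mplus \<Longrightarrow> distr M borel fst \<in> Mplus"
  unfolding Mplus_def
  using finite_measure.finite_measure_distr[OF Mplus_fin fst_meas, of M] by (simp add: Mplus_def)

lemma mass_fst: "M \<in> Mplus \<Longrightarrow> measure (distr M borel fst) UNIV = measure M UNIV"
  using measure_distr[OF fst_meas, of M UNIV] Mplus_space[of M] by simp

lemma main_bound:
  fixes V :: "'a::euclidean_space measure \<Rightarrow> ('a \<times> 'a) measure"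
    and \<phi> :: "'a \<times> 'a \<Rightarrow> real"
  assumes V_range: "\<forall>\<mu>\<in>Mplus. V \<mu> \<in> Mplus"
    and V_marg: "\<forall>\<mu>\<in>Mplus. distr (V \<mu>) borel fst = \<mu>"
    and \<mu>: "\<mu> \<in> Mplus" and \<nu>: "\<nu> \<in> Mplus"
    and Wgb: "Wg (V \<mu>) (V \<nu>) \<le> ennreal (CF * BL_dist \<mu> \<nu>)"
    and \<phi>m: "\<phi> \<in> borel_measurable borel" and \<phi>b: "\<And>z. \<bar>\<phi> z\<bar> \<le> 1" and \<tau>: "\<tau> \<ge> 0"
    and lip: "\<And>x v y w. \<phi> (x,v) - \<phi> (y,w) \<le> dist x y + \<tau> * dist v w"
  shows "integral\<^sup>L (V \<mu>) \<phi> - integral\<^sup>L (V \<nu>) \<phi> \<le> (1 + \<tau> * \<bar>CF\<bar>) * BL_dist \<mu> \<nu>"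
proof (rule field_le_epsilon)
  fix e :: real assume e: "0 < e"
  define B where "B = BL_dist \<mu> \<nu>"
  have B0: "0 \<le> B" unfolding B_def using BL_dist_nonneg \<mu> \<nu> by blast
  define \<epsilon> where "\<epsilon> = e / (\<tau> + 1)"
  have \<epsilon>0: "0 < \<epsilon>" unfolding \<epsilon>_def using e \<tau> by simp
  have \<tau>\<epsilon>: "\<tau> * \<epsilon> \<le> e" unfolding \<epsilon>_def using e \<tau> by (simp add: field_simps)
  have VM: "V \<mu> \<in> Mplus" "V \<nu> \<in> Mplus" using V_range \<mu> \<nu> by auto
  have hm: "distr (V \<mu>) borel fst = \<mu>" "distr (V \<nu>) borel fst = \<nu>" using V_marg \<mu> \<nu> by auto
  have "CF * B \<le> \<bar>CF\<bar> * B" using B0 by (simp add: mult_right_mono)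
  then have "ennreal (CF * B) \<le> ennreal (\<bar>CF\<bar> * B)" by (rule ennreal_leI)
  also have "\<dots> < ennreal (\<bar>CF\<bar> * B + \<epsilon>)"
  proof -
    have "0 \<le> \<bar>CF\<bar> * B" using B0 by simp
    then have pos: "0 < \<bar>CF\<bar> * B + \<epsilon>" using \<epsilon>0 by linarith
    show ?thesis by (rule ennreal_lessI[OF pos]) (simp add: \<epsilon>0)
  qed
  finally have "Wg (V \<mu>) (V \<nu>) < ennreal (\<bar>CF\<bar> * B + \<epsilon>)"
    using Wgb unfolding B_def by (rule le_less_trans[rotated])
  then obtain p where pS: "p \<in> {p. \<exists>U1 U2.
        submeasure U1 (V \<mu>) \<and> submeasure U2 (V \<nu>) \<and> p \<in> transport_plans U1 U2 \<and>
        ennreal (BL_dist (distr (V \<mu>) borel fst) (distr (V \<nu>) borel fst)) =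
          ennreal (TV_dist (distr (V \<mu>) borel fst) (distr U1 borel fst))
          + ennreal (TV_dist (distr (V \<nu>) borel fst) (distr U2 borel fst))
          + W1 (distr U1 borel fst) (distr U2 borel fst) \<and>
        distr p borel pi13 \<in> opt_couplings (distr U1 borel fst) (distr U2 borel fst)}"
    and I2: "(\<integral>\<^sup>+ z. ennreal (dist (snd (fst z)) (snd (snd z))) \<partial>p) < ennreal (\<bar>CF\<bar> * B + \<epsilon>)"
    unfolding Wg_def INF_less_iff by blast
  then obtain U1 U2 where U1: "submeasure U1 (V \<mu>)" and U2: "submeasure U2 (V \<nu>)"
    and p: "p \<in> transport_plans U1 U2"
    and eq: "ennreal B = ennreal (TV_dist \<mu> (distr U1 borel fst))
          + ennreal (TV_dist \<nu> (distr U2 borel fst))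
          + W1 (distr U1 borel fst) (distr U2 borel fst)"
    and opt: "distr p borel pi13 \<in> opt_couplings (distr U1 borel fst) (distr U2 borel fst)"
    unfolding hm B_def by blast
  define M1 where "M1 = distr U1 borel fst"
  define M2 where "M2 = distr U2 borel fst"
  define T1 where "T1 = TV_dist \<mu> M1"
  define T2 where "T2 = TV_dist \<nu> M2"
  have UM: "U1 \<in> Mplus" "U2 \<in> Mplus" using U1 U2 unfolding submeasure_def by auto
  have MM: "M1 \<in> Mplus" "M2 \<in> Mplus" unfolding M1_def M2_def using UM distr_fst_Mplus by auto
  have c1m: "(\<lambda>_. 1::real) \<in> borel_measurable borel" by simp
  have A1: "integral\<^sup>L (V \<mu>) \<phi> - integral\<^sup>L U1 \<phi> \<le> T1"
  proof -
    have "integral\<^sup>L (V \<mu>) \<phi> - integral\<^sup>L U1 \<phi> \<le> measure (V \<mu>) UNIV - measure U1 UNIV"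
      by (rule sub_mono[OF U1 VM(1) \<phi>m \<phi>b])
    also have "\<dots> = integral\<^sup>L \<mu> (\<lambda>_. 1) - integral\<^sup>L M1 (\<lambda>_. 1)"
      using mass_fst[OF VM(1)] mass_fst[OF UM(1)] hm Mplus_space[OF \<mu>] Mplus_space[OF MM(1)]
      unfolding M1_def by simp
    also have "\<dots> \<le> T1" unfolding T1_def by (rule TV_ge[OF \<mu> MM(1) c1m]) simp
    finally show ?thesis .
  qed
  have A2: "integral\<^sup>L U2 \<phi> - integral\<^sup>L (V \<nu>) \<phi> \<le> T2"
  proof -
    have nm: "(\<lambda>z. - \<phi> z) \<in> borel_measurable borel" using \<phi>m by simp
    have "integral\<^sup>L (V \<nu>) (\<lambda>z. - \<phi> z) - integral\<^sup>L U2 (\<lambda>z. - \<phi> z) \<le> measure (V \<nu>) UNIV - measure U2 UNIV"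
      by (rule sub_mono[OF U2 VM(2) nm]) (simp add: \<phi>b)
    also have "\<dots> = integral\<^sup>L \<nu> (\<lambda>_. 1) - integral\<^sup>L M2 (\<lambda>_. 1)"
      using mass_fst[OF VM(2)] mass_fst[OF UM(2)] hm Mplus_space[OF \<nu>] Mplus_space[OF MM(2)]
      unfolding M2_def by simp
    also have "\<dots> \<le> T2" unfolding T2_def by (rule TV_ge[OF \<nu> MM(2) c1m]) simp
    finally show ?thesis by simp
  qed
  have c0m: "(\<lambda>_. 0::real) \<in> borel_measurable borel" by simp
  have T10: "0 \<le> T1" unfolding T1_def using TV_ge[OF \<mu> MM(1) c0m] by simp
  have T20: "0 \<le> T2" unfolding T2_def using TV_ge[OF \<nu> MM(2) c0m] by simp
  have eq': "ennreal B = ennreal T1 + ennreal T2 + W1 M1 M2"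
    using eq unfolding T1_def T2_def M1_def M2_def .
  have "W1 M1 M2 \<le> ennreal B" unfolding eq' by simp
  then have "W1 M1 M2 < top" using le_less_trans by fastforce
  then obtain w where w0: "0 \<le> w" and w: "W1 M1 M2 = ennreal w"
    unfolding less_top_ennreal by blast
  have "ennreal B = ennreal (T1 + T2 + w)"
    unfolding eq' w using T10 T20 w0 by (simp add: ennreal_plus)
  then have Beq: "B = T1 + T2 + w" using B0 T10 T20 w0 by (subst (asm) ennreal_inj) auto
  have pM: "p \<in> Mplus" using p unfolding transport_plans_def by auto
  have pim: "pi13 \<in> p \<rightarrow>\<^sub>M borel"
    unfolding pi13_def by (intro cont_meas pM continuous_intros)
  have "(\<integral>\<^sup>+ z. ennreal (dist (fst (fst z)) (fst (snd z))) \<partial>p)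
      = (\<integral>\<^sup>+ z. ennreal (dist (fst z) (snd z)) \<partial>(distr p borel pi13))"
    by (subst nn_integral_distr[OF pim])
      (auto simp: pi13_def intro!: borel_measurable_continuous_onI continuous_intros)
  also have "\<dots> = W1 M1 M2" using opt unfolding opt_couplings_def M1_def M2_def by simp
  finally have I1: "(\<integral>\<^sup>+ z. ennreal (dist (fst (fst z)) (fst (snd z))) \<partial>p) = ennreal w"
    using w by simp
  have "(\<integral>\<^sup>+ z. ennreal (dist (snd (fst z)) (snd (snd z))) \<partial>p) < top"
    using I2 less_le_trans by fastforce
  then obtain i where i0: "0 \<le> i" and i: "(\<integral>\<^sup>+ z. ennreal (dist (snd (fst z)) (snd (snd z))) \<partial>p) = ennreal i"
    unfolding less_top_ennreal by blast
  have ilt: "i < \<bar>CF\<bar> * B + \<epsilon>" using I2 i0 unfolding i by (simp add: ennreal_less_iff)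
  have "ennreal (integral\<^sup>L U1 \<phi> - integral\<^sup>L U2 \<phi>) \<le> ennreal w + ennreal \<tau> * ennreal i"
    using coupling_bound[OF UM(1) UM(2) p \<phi>m \<phi>b \<tau> lip] unfolding I1 i .
  also have "\<dots> = ennreal (w + \<tau> * i)" using w0 i0 \<tau> by (simp add: ennreal_plus ennreal_mult)
  finally have Bc: "integral\<^sup>L U1 \<phi> - integral\<^sup>L U2 \<phi> \<le> w + \<tau> * i"
    using w0 i0 \<tau> by (subst (asm) ennreal_le_iff) auto
  have "\<tau> * i \<le> \<tau> * (\<bar>CF\<bar> * B + \<epsilon>)" using ilt \<tau> by (simp add: mult_left_mono)
  also have "\<dots> = \<tau> * \<bar>CF\<bar> * B + \<tau> * \<epsilon>" by (simp add: algebra_simps)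
  finally have "\<tau> * i \<le> \<tau> * \<bar>CF\<bar> * B + \<tau> * \<epsilon>" .
  then show "integral\<^sup>L (V \<mu>) \<phi> - integral\<^sup>L (V \<nu>) \<phi> \<le> (1 + \<tau> * \<bar>CF\<bar>) * BL_dist \<mu> \<nu> + e"
    using A1 A2 Bc Beq \<tau>\<epsilon> unfolding B_def[symmetric] by (simp add: algebra_simps)
qed

lemma sup_bound:
  assumes "\<And>\<psi>. BL_unit \<psi> \<Longrightarrow> F \<psi> \<le> (c::real)"
  shows "Sup {F \<psi> | \<psi>. BL_unit \<psi>} \<le> c"
proof (rule cSup_least)
  have "BL_unit (\<lambda>_. 0)" by (simp add: BL_unit_def)
  then show "{F \<psi> | \<psi>. BL_unit \<psi>} \<noteq> {}" by blast
qed (use assms in blast)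

theorem lemmaA3:
  fixes V :: "'a::euclidean_space measure \<Rightarrow> ('a \<times> 'a) measure"
  assumes V_range: "\<forall>\<mu>\<in>Mplus. V \<mu> \<in> Mplus"
    and V_marg: "\<forall>\<mu>\<in>Mplus. distr (V \<mu>) borel fst = \<mu>"
    and V_lip: "\<forall>R>0. \<exists>CF::real. \<forall>\<mu>\<in>Mplus. \<forall>\<nu>\<in>Mplus.
        supported_in \<mu> R \<and> supported_in \<nu> R \<longrightarrow>
        Wg (V \<mu>) (V \<nu>) \<le> ennreal (CF * BL_dist \<mu> \<nu>)"
  shows "(\<forall>R>0. \<exists>C::real. \<forall>\<mu>\<in>Mplus. \<forall>\<nu>\<in>Mplus.
            supported_in \<mu> R \<and> supported_in \<nu> R \<longrightarrow>
            BL_dist (V \<mu>) (V \<nu>) \<le> C * BL_dist \<mu> \<nu>)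
       \<and> (\<forall>R>0. \<exists>CH::real. \<forall>\<mu>\<in>Mplus. \<forall>\<nu>\<in>Mplus.
            supported_in \<mu> R \<and> supported_in \<nu> R \<longrightarrow>
            (\<forall>\<tau>>0. V3_quantity \<tau> (V \<mu>) (V \<nu>) \<le> (1 + CH * \<tau>) * BL_dist \<mu> \<nu>))"
proof (intro conjI allI impI)
  fix R :: real assume R: "R > 0"
  then obtain CF where CF: "\<forall>\<mu>\<in>Mplus. \<forall>\<nu>\<in>Mplus.
        supported_in \<mu> R \<and> supported_in \<nu> R \<longrightarrow>
        Wg (V \<mu>) (V \<nu>) \<le> ennreal (CF * BL_dist \<mu> \<nu>)" using V_lip by blast
  show "\<exists>C::real. \<forall>\<mu>\<in>Mplus. \<forall>\<nu>\<in>Mplus.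
            supported_in \<mu> R \<and> supported_in \<nu> R \<longrightarrow>
            BL_dist (V \<mu>) (V \<nu>) \<le> C * BL_dist \<mu> \<nu>"
  proof (intro exI ballI impI)
    fix \<mu> \<nu> :: "'a measure" assume \<mu>: "\<mu> \<in> Mplus" and \<nu>: "\<nu> \<in> Mplus" and s: "supported_in \<mu> R \<and> supported_in \<nu> R"
    have W: "Wg (V \<mu>) (V \<nu>) \<le> ennreal (CF * BL_dist \<mu> \<nu>)" using CF \<mu> \<nu> s by blast
    show "BL_dist (V \<mu>) (V \<nu>) \<le> (1 + 1 * \<bar>CF\<bar>) * BL_dist \<mu> \<nu>"
      unfolding BL_dist_def[of "V \<mu>"]
    proof (rule sup_bound)
      fix \<psi> :: "'a \<times> 'a \<Rightarrow> real" assume \<psi>: "BL_unit \<psi>"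
      show "integral\<^sup>L (V \<mu>) \<psi> - integral\<^sup>L (V \<nu>) \<psi> \<le> (1 + 1 * \<bar>CF\<bar>) * BL_dist \<mu> \<nu>"
      proof (rule main_bound[OF V_range V_marg \<mu> \<nu> W BL_unit_meas[OF \<psi>]])
        show "\<bar>\<psi> z\<bar> \<le> 1" for z using \<psi> unfolding BL_unit_def by blast
        show "0 \<le> (1::real)" by simp
        fix x v y w :: 'a
        have "\<psi> (x,v) - \<psi> (y,w) \<le> dist (x,v) (y,w)"
          using \<psi> unfolding BL_unit_def by (meson abs_le_D1)
        also have "\<dots> \<le> dist x y + dist v w"
          unfolding dist_Pair_Pair by (rule sqrt_sum_squares_le_sum) auto
        finally show "\<psi> (x,v) - \<psi> (y,w) \<le> dist x y + 1 * dist v w" by simp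
      qed
    qed
  qed
next
  fix R :: real assume R: "R > 0"
  then obtain CF where CF: "\<forall>\<mu>\<in>Mplus. \<forall>\<nu>\<in>Mplus.
        supported_in \<mu> R \<and> supported_in \<nu> R \<longrightarrow>
        Wg (V \<mu>) (V \<nu>) \<le> ennreal (CF * BL_dist \<mu> \<nu>)" using V_lip by blast
  show "\<exists>CH::real. \<forall>\<mu>\<in>Mplus. \<forall>\<nu>\<in>Mplus.
            supported_in \<mu> R \<and> supported_in \<nu> R \<longrightarrow>
            (\<forall>\<tau>>0. V3_quantity \<tau> (V \<mu>) (V \<nu>) \<le> (1 + CH * \<tau>) * BL_dist \<mu> \<nu>)"
  proof (intro exI ballI impI allI)
    fix \<mu> \<nu> :: "'a measure" assume \<mu>: "\<mu> \<in> Mplus" and \<nu>: "\<nu> \<in> Mplus" and s: "supported_in \<mu> R \<and> supported_in \<nu> R"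
    fix \<tau> :: real assume \<tau>: "\<tau> > 0"
    have W: "Wg (V \<mu>) (V \<nu>) \<le> ennreal (CF * BL_dist \<mu> \<nu>)" using CF \<mu> \<nu> s by blast
    show "V3_quantity \<tau> (V \<mu>) (V \<nu>) \<le> (1 + \<bar>CF\<bar> * \<tau>) * BL_dist \<mu> \<nu>"
      unfolding V3_quantity_def
    proof (rule sup_bound)
      fix \<psi> :: "'a \<Rightarrow> real" assume \<psi>: "BL_unit \<psi>"
      define \<phi> where "\<phi> z = \<psi> (fst z + \<tau> *\<^sub>R snd z)" for z :: "'a \<times> 'a"
      have \<phi>m: "\<phi> \<in> borel_measurable borel"
        unfolding \<phi>_def
        by (rule measurable_compose[OF borel_measurable_continuous_onI BL_unit_meas[OF \<psi>]])
          (intro continuous_intros)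
      have "integral\<^sup>L (V \<mu>) \<phi> - integral\<^sup>L (V \<nu>) \<phi> \<le> (1 + \<tau> * \<bar>CF\<bar>) * BL_dist \<mu> \<nu>"
      proof (rule main_bound[OF V_range V_marg \<mu> \<nu> W \<phi>m])
        show "\<bar>\<phi> z\<bar> \<le> 1" for z using \<psi> unfolding BL_unit_def \<phi>_def by blast
        show "0 \<le> \<tau>" using \<tau> by simp
        fix x v y w :: 'a
        have "\<phi> (x,v) - \<phi> (y,w) \<le> dist (x + \<tau> *\<^sub>R v) (y + \<tau> *\<^sub>R w)"
          using \<psi> unfolding BL_unit_def \<phi>_def by (simp add: abs_le_iff)
        also have "\<dots> = norm ((x - y) + \<tau> *\<^sub>R (v - w))"
          by (simp add: dist_norm algebra_simps)
        also have "\<dots> \<le> norm (x - y) + norm (\<tau> *\<^sub>R (v - w))" by (rule norm_triangle_ineq)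
        also have "\<dots> = dist x y + \<tau> * dist v w" using \<tau> by (simp add: dist_norm)
        finally show "\<phi> (x,v) - \<phi> (y,w) \<le> dist x y + \<tau> * dist v w" .
      qed
      then show "(\<integral>z. \<psi> (fst z + \<tau> *\<^sub>R snd z) \<partial>V \<mu>) - (\<integral>z. \<psi> (fst z + \<tau> *\<^sub>R snd z) \<partial>V \<nu>)
          \<le> (1 + \<bar>CF\<bar> * \<tau>) * BL_dist \<mu> \<nu>"
        unfolding \<phi>_def by (simp add: mult.commute)
    qed
  qed
qed

end
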